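(* Let $\mu_1,\mu_2,\mu_3$ be three mass distributions in $\mathbb{R}^2$ and let $q$ be a point of $\mathbb{R}^2$. Then there exist two lines $\ell_1,\ell_2$ (where $\ell_2$ may be a line at infinity) such that $\{\ell_1,\ell_2\}$ simultaneously bisects $\mu_1,\mu_2,\mu_3$ and $\ell_1$ goes through $q$.
   Context: A mass distribution $\mu$ on $\mathbb{R}^2$ is a measure such that all open subsets are measurable, $0<\mu(\mathbb{R}^2)<\infty$, and $\mu(S)=0$ for every lower-dimensional subset $S$. For a finite set $\mathcal{L}$ of oriented lines, each $\ell\in\mathcal{L}$ has positive side $\ell^+=\{x: g(x)\ge 0\}$ for a defining affine function $g(x)=a_1x_1+a_2x_2+a_0$; lines at infinity ($g\equiv a_0\neq 0$ constant) are allowed, with $\ell^+=\mathbb{R}^2$, $\ell^-=\emptyset$. Let $\lambda(p)$ be the number of lines of $\mathcal{L}$ having $p$ on their positive side, $R^+=\{p:\lambda(p)\text{ even}\}$, $R^-=\{p:\lambda(p)\text{ odd}\}$. $\mathcal{L}$ simultaneously bisects $\mu_1,\dots,\mu_k$ if $\mu_i(R^+)=\mu_i(R^-)$ for all $i$; an unoriented set of lines bisects if some orientation does. *)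

theory Defs
  imports "HOL-Analysis.Analysis"
begin

definition mass_distribution :: "(real^2) measure \<Rightarrow> bool" where
  "mass_distribution \<mu> \<longleftrightarrow>
     space \<mu> = UNIV \<and>
     sets borel \<subseteq> sets \<mu> \<and>
     0 < emeasure \<mu> UNIV \<and> emeasure \<mu> UNIV < \<infinity> \<and>
     (\<forall>(a::real^2) (c::real). a \<noteq> 0 \<longrightarrow> emeasure \<mu> {x. a \<bullet> x + c = 0} = 0)"

text \<open>An oriented line is given by its defining affine function g(x) = a . x + c,
  encoded as the pair (a, c), with (a, c) not both zero. If a = 0 it is a line at
  infinity (positive side = whole plane).\<close>

type_synonym oline = "(real^2) \<times> real"

definition valid_line :: "oline \<Rightarrow> bool" where
  "valid_line l \<longleftrightarrow> fst l \<noteq> 0 \<or> snd l \<noteq> 0"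

definition proper_line :: "oline \<Rightarrow> bool" where
  "proper_line l \<longleftrightarrow> fst l \<noteq> 0"

definition on_line :: "real^2 \<Rightarrow> oline \<Rightarrow> bool" where
  "on_line p l \<longleftrightarrow> fst l \<bullet> p + snd l = 0"

definition pos_side :: "oline \<Rightarrow> (real^2) set" where
  "pos_side l = {x. fst l \<bullet> x + snd l \<ge> 0}"

definition lam :: "oline list \<Rightarrow> real^2 \<Rightarrow> nat" where
  "lam L p = length (filter (\<lambda>l. p \<in> pos_side l) L)"

definition R_plus :: "oline list \<Rightarrow> (real^2) set" where
  "R_plus L = {p. even (lam L p)}"

definition R_minus :: "oline list \<Rightarrow> (real^2) set" where
  "R_minus L = {p. odd (lam L p)}"

definition simul_bisects :: "oline list \<Rightarrow> (real^2) measure list \<Rightarrow> bool" where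
  "simul_bisects L Ms \<longleftrightarrow>
     (\<forall>\<mu>\<in>set Ms. emeasure \<mu> (R_plus L) = emeasure \<mu> (R_minus L))"

end

theory Submission imports Defs begin


lemma exp_diff_int:
  assumes "exp (\<i> * complex_of_real a) = exp (\<i> * complex_of_real b)"
  shows "\<exists>n::int. a - b = 2 * pi * n"
proof -
  from assms obtain n::int where "\<i> * complex_of_real a = \<i> * complex_of_real b + (of_int (2 * n) * pi) * \<i>"
    using exp_eq by blast
  then have "Im (\<i> * complex_of_real a) = Im (\<i> * complex_of_real b + (of_int (2 * n) * pi) * \<i>)" by simp
  then have "a = b + 2 * n * pi" by simp
  then show ?thesis by (intro exI[of _ n]) (simp add: algebra_simps)
qed

lemma const_minus_one:
  fixes d :: "'a::real_normed_vector \<Rightarrow> real"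
  assumes "connected S" "continuous_on S d" "\<And>x. x \<in> S \<Longrightarrow> exp (\<i> * complex_of_real (d x)) = -1"
  shows "d constant_on S"
proof (rule continuous_discrete_range_constant[OF assms(1,2)])
  fix x assume x: "x \<in> S"
  show "\<exists>e>0. \<forall>y. y \<in> S \<and> d y \<noteq> d x \<longrightarrow> e \<le> norm (d y - d x)"
  proof (intro exI[of _ "2*pi"] conjI allI impI)
    fix y assume y: "y \<in> S \<and> d y \<noteq> d x"
    then obtain n::int where n: "d y - d x = 2 * pi * n"
      using exp_diff_int[of "d y" "d x"] assms(3) x by auto
    with y have "n \<noteq> 0" by auto
    then have "1 \<le> \<bar>real_of_int n\<bar>" by linarith
    then have "2 * pi * 1 \<le> 2 * pi * \<bar>real_of_int n\<bar>" by (intro mult_left_mono) auto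
    then show "2 * pi \<le> norm (d y - d x)" using n by (simp add: abs_mult)
  qed simp
qed


lemma pencil_mono:
  fixes t t' g h :: real
  assumes "0 \<le> t" "t \<le> t'" "t' \<le> pi" "g \<noteq> 0"
    and w: "(0 \<le> g) = (0 \<le> cos t' * g + sin t' * h)"
  shows "(0 \<le> g) = (0 \<le> cos t * g + sin t * h)"
proof -
  define v where "v = cos t * g + sin t * h"
  define w where "w = cos t' * g + sin t' * h"
  have id: "sin t' * v - sin t * w = g * sin (t' - t)"
    by (simp add: v_def w_def sin_diff algebra_simps)
  have sd: "0 \<le> sin (t' - t)" using assms by (intro sin_ge_zero) auto
  have st: "0 \<le> sin t" using assms by (intro sin_ge_zero) auto
  show ?thesis
  proof (cases "t' = pi")
    case True
    then have "w = - g" by (simp add: w_def)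
    then show ?thesis using w assms(4) by (auto simp: w_def)
  next
    case False
    show ?thesis
    proof (cases "t' = 0")
      case True
      then have "t = 0" using assms by auto
      then show ?thesis using True w by simp
    next
      case False2: False
      have st': "0 < sin t'" using assms False False2 by (intro sin_gt_zero) auto
      show ?thesis
      proof (cases "g > 0")
        case True
        then have "0 \<le> w" using w by (simp add: w_def)
        then have "0 \<le> sin t * w + g * sin (t' - t)" using True sd st by simp
        then have "0 \<le> sin t' * v" using id by simp
        then have "0 \<le> v" using st' by (simp add: zero_le_mult_iff)
        then show ?thesis using True by (simp add: v_def)
      next
        case False3: False
        then have gn: "g < 0" using assms(4) by simp
        then have "w < 0" using w by (simp add: w_def)
        show ?thesis
        proof (cases "t = 0")
          case True then show ?thesis using gn by simp
        next
          case False4: False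
          have "0 < sin t" using assms False4 False by (intro sin_gt_zero) auto
          then have "sin t * w < 0" using \<open>w < 0\<close> by (simp add: mult_pos_neg)
          moreover have "g * sin (t' - t) \<le> 0" using gn sd by (simp add: mult_nonpos_nonneg)
          ultimately have "sin t' * v < 0" using id by simp
          then have "v < 0" using st' by (simp add: mult_less_0_iff)
          then show ?thesis using gn by (simp add: v_def)
        qed
      qed
    qed
  qed
qed


lemma topo:
  fixes G :: "real \<times> real \<Rightarrow> complex"
  assumes cont: "continuous_on UNIV G"
   and anti: "\<And>a b. G (a, b + pi) = - G (a, b)"
   and glue: "\<And>b. G (pi, b) = G (0, pi - b)"
  shows "\<exists>a b. 0 \<le> a \<and> a \<le> pi \<and> 0 \<le> b \<and> b \<le> 2*pi \<and> G (a, b) = 0"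
proof (rule ccontr)
  assume neg: "\<not> ?thesis"
  define S where "S = cbox (0::real, 0::real) (pi, 2*pi)"
  have nz: "\<And>x. x \<in> S \<Longrightarrow> G x \<noteq> 0" using neg by (force simp: S_def cbox_Pair_iff)
  define \<gamma> where "\<gamma> x = G x / complex_of_real (cmod (G x))" for x
  have "continuous_on S \<gamma>" unfolding \<gamma>_def
    by (intro continuous_intros continuous_on_subset[OF cont]) (auto dest: nz)
  moreover have "\<gamma> \<in> S \<rightarrow> sphere 0 1" using nz by (auto simp: \<gamma>_def norm_divide)
  moreover have "Borsukian S" unfolding S_def by (intro convex_imp_Borsukian convex_box)
  ultimately obtain g where gc: "continuous_on S (complex_of_real \<circ> g)"
    and ge: "\<And>x. x \<in> S \<Longrightarrow> \<gamma> x = exp (\<i> * complex_of_real (g x))"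
    unfolding Borsukian_continuous_logarithm_circle_real by metis
  have gc': "continuous_on S g"
  proof -
    have "continuous_on S (Re \<circ> (complex_of_real \<circ> g))" by (intro continuous_on_compose gc continuous_intros)
    then show ?thesis by (simp add: o_def)
  qed
  have \<gamma>anti: "\<gamma> (a, b + pi) = - \<gamma> (a, b)" for a b by (simp add: \<gamma>_def anti)
  have \<gamma>glue: "\<gamma> (pi, b) = - \<gamma> (0, 2*pi - b)" for b
  proof -
    have "G (0, (pi - b) + pi) = - G (0, pi - b)" by (rule anti)
    then have "G (pi, b) = - G (0, 2*pi - b)" by (simp add: glue algebra_simps)
    then show ?thesis by (simp add: \<gamma>_def)
  qed
  have expm: "exp (\<i> * complex_of_real (u - v)) = -1" if "exp (\<i> * complex_of_real u) = - exp (\<i> * complex_of_real v)" for u v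
  proof -
    have "exp (\<i> * complex_of_real (u - v)) = exp (\<i> * complex_of_real u) / exp (\<i> * complex_of_real v)"
      by (simp add: algebra_simps exp_diff)
    also have "\<dots> = -1" using that by simp
    finally show ?thesis .
  qed
  define S1 where "S1 = cbox (0::real, 0::real) (pi, pi)"
  have S1S: "x \<in> S1 \<Longrightarrow> x \<in> S" "x \<in> S1 \<Longrightarrow> (fst x, snd x + pi) \<in> S" for x
    by (cases x; auto simp: S1_def S_def cbox_Pair_iff)+
  have "(\<lambda>x. g (fst x, snd x + pi) - g x) constant_on S1"
  proof (rule const_minus_one)
    show "connected S1" unfolding S1_def by (intro convex_connected convex_box)
    show "continuous_on S1 (\<lambda>x. g (fst x, snd x + pi) - g x)"
      by (intro continuous_intros continuous_on_compose2[OF gc'] continuous_on_subset[OF gc']) (use S1S in auto)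
    fix x assume "x \<in> S1"
    then show "exp (\<i> * complex_of_real (g (fst x, snd x + pi) - g x)) = -1"
      using S1S[of x] ge \<gamma>anti[of "fst x" "snd x"] by (intro expm) auto
  qed
  then obtain D where D: "\<And>x. x \<in> S1 \<Longrightarrow> g (fst x, snd x + pi) - g x = D"
    unfolding constant_on_def by blast
  have D1: "exp (\<i> * complex_of_real D) = -1"
    using D[of "(0,0)"] S1S[of "(0,0)"] ge \<gamma>anti[of 0 0] by (auto simp: S1_def intro!: expm[where u="g (0, 0+pi)" and v="g (0,0)", simplified])
  have wind: "g (a, 2*pi) - g (a, 0) = 2 * D" if "0 \<le> a" "a \<le> pi" for a
  proof -
    have "g (a, 0 + pi) - g (a, 0) = D" using D[of "(a,0)"] that by (auto simp: S1_def cbox_Pair_iff)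
    moreover have "g (a, pi + pi) - g (a, pi) = D" using D[of "(a,pi)"] that by (auto simp: S1_def cbox_Pair_iff)
    ultimately show ?thesis by (simp add: algebra_simps)
  qed
  define S2 where "S2 = cbox (0::real) (2*pi)"
  have "(\<lambda>b. g (pi, b) - g (0, 2*pi - b)) constant_on S2"
  proof (rule const_minus_one)
    show "connected S2" unfolding S2_def by (intro convex_connected convex_box)
    show "continuous_on S2 (\<lambda>b. g (pi, b) - g (0, 2*pi - b))"
      by (intro continuous_intros continuous_on_compose2[OF gc']) (auto simp: S2_def S_def cbox_Pair_iff)
    fix b assume b: "b \<in> S2"
    then have "(pi, b) \<in> S" "(0, 2*pi - b) \<in> S" by (auto simp: S2_def S_def cbox_Pair_iff)
    then show "exp (\<i> * complex_of_real (g (pi, b) - g (0, 2*pi - b))) = -1"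
      using ge \<gamma>glue[of b] by (intro expm) auto
  qed
  then obtain E where E: "\<And>b. b \<in> S2 \<Longrightarrow> g (pi, b) - g (0, 2*pi - b) = E"
    unfolding constant_on_def by blast
  have "g (pi, 2*pi) - g (pi, 0) = - (g (0, 2*pi) - g (0, 0))"
    using E[of 0] E[of "2*pi"] by (auto simp: S2_def)
  then have "2 * D = - (2 * D)" using wind[of pi] wind[of 0] by simp
  then have "D = 0" by simp
  then show False using D1 by simp
qed


definition gl :: "oline \<Rightarrow> real^2 \<Rightarrow> real" where "gl l p = fst l \<bullet> p + snd l"
definition sg :: "oline \<Rightarrow> oline \<Rightarrow> real^2 \<Rightarrow> real" where
  "sg l1 l2 p = (if (0 \<le> gl l1 p) = (0 \<le> gl l2 p) then 1 else -1)"
definition FF :: "(real^2) measure \<Rightarrow> oline \<Rightarrow> oline \<Rightarrow> real" where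
  "FF \<mu> l1 l2 = integral\<^sup>L \<mu> (sg l1 l2)"

lemma gl_minus[simp]: "gl (- l) p = - gl l p" by (simp add: gl_def)
lemma gl_add: "gl (l + k) p = gl l p + gl k p" by (simp add: gl_def inner_add_left)
lemma gl_scale: "gl (a *\<^sub>R l) p = a * gl l p" by (simp add: gl_def algebra_simps)
lemma continuous_gl[continuous_intros]:
  "continuous_on S f \<Longrightarrow> continuous_on S g \<Longrightarrow> continuous_on S (\<lambda>x. gl (f x) (g x))"
  unfolding gl_def by (intro continuous_intros)

lemma gl_borel[measurable]: "gl l \<in> borel_measurable borel"
  unfolding gl_def by (intro borel_measurable_continuous_onI continuous_intros)

locale md =
  fixes \<mu> :: "(real^2) measure"
  assumes md: "mass_distribution \<mu>"
begin

lemma space[simp]: "space \<mu> = UNIV" using md by (simp add: mass_distribution_def)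
lemma sets_borel: "A \<in> sets borel \<Longrightarrow> A \<in> sets \<mu>" using md by (auto simp: mass_distribution_def)
lemma fin: "finite_measure \<mu>"
  using md by (intro finite_measureI) (auto simp: mass_distribution_def)
lemma meas_borel: "f \<in> borel_measurable borel \<Longrightarrow> f \<in> borel_measurable \<mu>"
  by (rule borel_measurable_subalgebra[of borel]) (use md in \<open>auto simp: mass_distribution_def\<close>)

lemma sg_borel: "sg l1 l2 \<in> borel_measurable borel"
  unfolding sg_def by measurable

lemma sg_meas: "sg l1 l2 \<in> borel_measurable \<mu>"
  by (rule meas_borel[OF sg_borel])

lemma sg_integrable: "integrable \<mu> (sg l1 l2)"
  by (rule finite_measure.integrable_const_bound[OF fin, where B=1]) (auto simp: sg_def sg_meas)

lemma null_line: assumes "l \<noteq> 0" shows "{p. gl l p = 0} \<in> null_sets \<mu>"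
proof (cases "fst l = 0")
  case True
  then have "snd l \<noteq> 0" using assms by (cases l) (auto simp: zero_prod_def)
  then have "{p. gl l p = 0} = {}" using True by (auto simp: gl_def)
  then show ?thesis by simp
next
  case False
  have "{p. gl l p = 0} \<in> sets borel" by measurable
  then have "{p. gl l p = 0} \<in> sets \<mu>" by (rule sets_borel)
  moreover have "emeasure \<mu> {p. gl l p = 0} = 0"
    using md False by (auto simp: mass_distribution_def gl_def)
  ultimately show ?thesis by (auto simp: null_sets_def)
qed

lemma AE_off_line: assumes "l \<noteq> 0" shows "AE p in \<mu>. gl l p \<noteq> 0"
  by (rule AE_I'[OF null_line[OF assms]]) auto

end


context md begin

lemma FF_bisect:
  assumes "FF \<mu> l1 l2 = 0"
  shows "emeasure \<mu> (R_plus [l1,l2]) = emeasure \<mu> (R_minus [l1,l2])"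
proof -
  define A where "A = {p. (0 \<le> gl l1 p) = (0 \<le> gl l2 p)}"
  have RA: "R_plus [l1,l2] = A" "R_minus [l1,l2] = - A"
    by (auto simp: R_plus_def R_minus_def A_def lam_def pos_side_def gl_def)
  have Ab: "A \<in> sets borel" unfolding A_def by measurable
  have Am: "A \<in> sets \<mu>" "- A \<in> sets \<mu>" using sets_borel[OF Ab] sets_borel[OF borel_comp[OF Ab]] by auto
  have "sg l1 l2 = (\<lambda>p. indicator A p - indicator (- A) p)"
    by (auto simp: fun_eq_iff sg_def A_def indicator_def)
  then have "FF \<mu> l1 l2 = integral\<^sup>L \<mu> (indicator A) - integral\<^sup>L \<mu> (indicator (- A) :: _ \<Rightarrow> real)"
    unfolding FF_def
    by (simp add: Bochner_Integration.integral_diff finite_measure.integrable_const_bound[OF fin, where B=1] Am borel_measurable_indicator)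
  then have "measure \<mu> A = measure \<mu> (- A)" using assms by simp
  then show ?thesis using RA by (simp add: finite_measure.emeasure_eq_measure[OF fin])
qed

lemma FF_neg1: assumes "l1 \<noteq> 0" shows "FF \<mu> (- l1) l2 = - FF \<mu> l1 l2"
proof -
  have "integral\<^sup>L \<mu> (sg (- l1) l2) = integral\<^sup>L \<mu> (\<lambda>p. - sg l1 l2 p)"
  proof (rule integral_cong_AE)
    show "sg (- l1) l2 \<in> borel_measurable \<mu>" by (rule sg_meas)
    show "(\<lambda>p. - sg l1 l2 p) \<in> borel_measurable \<mu>" using sg_meas by measurable
    show "AE p in \<mu>. sg (- l1) l2 p = - sg l1 l2 p"
      using AE_off_line[OF assms] by eventually_elim (auto simp: sg_def)
  qed
  then show ?thesis by (simp add: FF_def)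
qed

lemma FF_neg2: assumes "l2 \<noteq> 0" shows "FF \<mu> l1 (- l2) = - FF \<mu> l1 l2"
proof -
  have "integral\<^sup>L \<mu> (sg l1 (- l2)) = integral\<^sup>L \<mu> (\<lambda>p. - sg l1 l2 p)"
  proof (rule integral_cong_AE)
    show "sg l1 (- l2) \<in> borel_measurable \<mu>" by (rule sg_meas)
    show "(\<lambda>p. - sg l1 l2 p) \<in> borel_measurable \<mu>" using sg_meas by measurable
    show "AE p in \<mu>. sg l1 (- l2) p = - sg l1 l2 p"
      using AE_off_line[OF assms] by eventually_elim (auto simp: sg_def)
  qed
  then show ?thesis by (simp add: FF_def)
qed

lemma FF_same: "FF \<mu> l l = measure \<mu> UNIV"
proof -
  have "sg l l = (\<lambda>_. 1)" by (simp add: fun_eq_iff sg_def)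
  then show ?thesis by (simp add: FF_def)
qed

lemma total_pos: "0 < measure \<mu> UNIV"
  using md by (auto simp: mass_distribution_def finite_measure.emeasure_eq_measure[OF fin])

lemma FF_pencil_mono:
  assumes "n \<noteq> 0" "0 \<le> t" "t \<le> t'" "t' \<le> pi"
  shows "FF \<mu> n (cos t' *\<^sub>R n + sin t' *\<^sub>R k) \<le> FF \<mu> n (cos t *\<^sub>R n + sin t *\<^sub>R k)"
  unfolding FF_def
proof (rule integral_mono_AE[OF sg_integrable sg_integrable])
  show "AE p in \<mu>. sg n (cos t' *\<^sub>R n + sin t' *\<^sub>R k) p \<le> sg n (cos t *\<^sub>R n + sin t *\<^sub>R k) p"
    using AE_off_line[OF assms(1)]
  proof eventually_elim
    case (elim p)
    have "(0 \<le> gl n p) = (0 \<le> cos t' * gl n p + sin t' * gl k p) \<Longrightarrow>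
          (0 \<le> gl n p) = (0 \<le> cos t * gl n p + sin t * gl k p)"
      by (rule pencil_mono) (use assms elim in auto)
    then show ?case by (auto simp: sg_def gl_add gl_scale)
  qed
qed

lemma sg_eventually:
  assumes "X \<longlonglongrightarrow> (l1, l2)" "gl l1 p \<noteq> 0" "gl l2 p \<noteq> 0"
  shows "(\<lambda>n. sg (fst (X n)) (snd (X n)) p) \<longlonglongrightarrow> sg l1 l2 p"
proof (rule tendsto_eventually)
  have c1: "(\<lambda>n. gl (fst (X n)) p) \<longlonglongrightarrow> gl l1 p"
    unfolding gl_def using assms(1) by (intro tendsto_intros) (auto dest: tendsto_fst)
  have c2: "(\<lambda>n. gl (snd (X n)) p) \<longlonglongrightarrow> gl l2 p"
    unfolding gl_def using assms(1) by (intro tendsto_intros) (auto dest: tendsto_snd)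
  have e1: "eventually (\<lambda>n. (0 \<le> gl (fst (X n)) p) = (0 \<le> gl l1 p)) sequentially"
  proof (cases "gl l1 p > 0")
    case True
    show ?thesis using order_tendstoD(1)[OF c1 True] by eventually_elim (use True in auto)
  next
    case False
    then have "gl l1 p < 0" using assms(2) by simp
    show ?thesis using order_tendstoD(2)[OF c1 \<open>gl l1 p < 0\<close>] by eventually_elim (use \<open>gl l1 p < 0\<close> in auto)
  qed
  have e2: "eventually (\<lambda>n. (0 \<le> gl (snd (X n)) p) = (0 \<le> gl l2 p)) sequentially"
  proof (cases "gl l2 p > 0")
    case True
    show ?thesis using order_tendstoD(1)[OF c2 True] by eventually_elim (use True in auto)
  next
    case False
    then have "gl l2 p < 0" using assms(3) by simp
    show ?thesis using order_tendstoD(2)[OF c2 \<open>gl l2 p < 0\<close>] by eventually_elim (use \<open>gl l2 p < 0\<close> in auto)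
  qed
  show "eventually (\<lambda>n. sg (fst (X n)) (snd (X n)) p = sg l1 l2 p) sequentially"
    using e1 e2 by eventually_elim (simp add: sg_def)
qed

lemma FF_cont: "continuous_on {x. fst x \<noteq> 0 \<and> snd x \<noteq> 0} (\<lambda>x. FF \<mu> (fst x) (snd x))"
proof (rule continuous_on_sequentiallyI)
  fix X :: "nat \<Rightarrow> oline \<times> oline" and a assume X: "\<forall>n. X n \<in> {x. fst x \<noteq> 0 \<and> snd x \<noteq> 0}" and a: "a \<in> {x. fst x \<noteq> 0 \<and> snd x \<noteq> 0}"
    and lim: "X \<longlonglongrightarrow> a"
  obtain l1 l2 where a': "a = (l1, l2)" by (cases a)
  have "(\<lambda>n. integral\<^sup>L \<mu> (sg (fst (X n)) (snd (X n)))) \<longlonglongrightarrow> integral\<^sup>L \<mu> (sg l1 l2)"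
  proof (rule integral_dominated_convergence[where w="\<lambda>_. 1"])
    show "sg l1 l2 \<in> borel_measurable \<mu>" by (rule sg_meas)
    show "sg (fst (X n)) (snd (X n)) \<in> borel_measurable \<mu>" for n by (rule sg_meas)
    show "integrable \<mu> (\<lambda>_. 1::real)" using fin by (simp add: finite_measure.integrable_const)
    show "AE x in \<mu>. norm (sg (fst (X n)) (snd (X n)) x) \<le> 1" for n by (simp add: sg_def)
    show "AE x in \<mu>. (\<lambda>n. sg (fst (X n)) (snd (X n)) x) \<longlonglongrightarrow> sg l1 l2 x"
    proof -
      have "l1 \<noteq> 0" "l2 \<noteq> 0" using a a' by auto
      show ?thesis using AE_off_line[OF \<open>l1 \<noteq> 0\<close>] AE_off_line[OF \<open>l2 \<noteq> 0\<close>]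
        by eventually_elim (rule sg_eventually[OF lim[unfolded a']])
    qed
  qed
  then show "(\<lambda>n. FF \<mu> (fst (X n)) (snd (X n))) \<longlonglongrightarrow> FF \<mu> (fst a) (snd a)"
    by (simp add: FF_def a')
qed

end


lemma implicit_cont:
  fixes H :: "'a::real_normed_vector \<Rightarrow> real \<Rightarrow> real" and T :: "'a \<Rightarrow> real"
  assumes cont: "\<And>t. continuous_on UNIV (\<lambda>x. H x t)"
    and dec: "\<And>x t t'. 0 \<le> t \<Longrightarrow> t < t' \<Longrightarrow> t' \<le> pi \<Longrightarrow> H x t' < H x t"
    and zero: "\<And>x. 0 \<le> T x \<and> T x \<le> pi \<and> H x (T x) = 0"
  shows "continuous_on UNIV T"
proof -
  have dec': "H x t' \<le> H x t" if "0 \<le> t" "t \<le> t'" "t' \<le> pi" for x t t'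
    using dec[of t t' x] that by (cases "t = t'") auto
  have "isCont T x0" for x0
  proof -
    have tH: "((\<lambda>x. H x t) \<longlongrightarrow> H x0 t) (at x0)" for t
      using cont[of t] by (simp add: continuous_on_def)
    show ?thesis unfolding isCont_def
    proof (rule order_tendstoI)
      fix a assume a: "a < T x0"
      show "\<forall>\<^sub>F x in at x0. a < T x"
      proof (cases "a < 0")
        case True then show ?thesis using zero by (auto intro!: always_eventually less_le_trans[OF True])
      next
        case False
        then have "H x0 (T x0) < H x0 a" using dec[of a "T x0" x0] a zero[of x0] by auto
        then have "0 < H x0 a" using zero[of x0] by simp
        from order_tendstoD(1)[OF tH this] show ?thesis
        proof eventually_elim
          case (elim x)
          show ?case
          proof (rule ccontr)
            assume "\<not> a < T x"
            then have "H x a \<le> H x (T x)" using dec'[of "T x" a x] zero[of x] a zero[of x0] by auto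
            then show False using elim zero[of x] by simp
          qed
        qed
      qed
    next
      fix a assume a: "T x0 < a"
      show "\<forall>\<^sub>F x in at x0. T x < a"
      proof (cases "a > pi")
        case True then show ?thesis using zero by (auto intro!: always_eventually le_less_trans[OF _ True])
      next
        case False
        then have "H x0 a < H x0 (T x0)" using dec[of "T x0" a x0] a zero[of x0] by auto
        then have "H x0 a < 0" using zero[of x0] by simp
        from order_tendstoD(2)[OF tH this] show ?thesis
        proof eventually_elim
          case (elim x)
          show ?case
          proof (rule ccontr)
            assume "\<not> T x < a"
            then have "H x (T x) \<le> H x a" using dec'[of a "T x" x] zero[of x] a zero[of x0] by auto
            then show False using elim zero[of x] by simp
          qed
        qed
      qed
    qed
  qed
  then show ?thesis by (simp add: continuous_at_imp_continuous_on)
qed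

definition e1 :: "real^2" where "e1 = axis 1 1"
definition e2 :: "real^2" where "e2 = axis 2 1"
definition a1 :: "real \<Rightarrow> real^2" where "a1 th = cos th *\<^sub>R e1 + sin th *\<^sub>R e2"
definition a2 :: "real \<Rightarrow> real^2" where "a2 th = (- sin th) *\<^sub>R e1 + cos th *\<^sub>R e2"
definition n1 :: "real^2 \<Rightarrow> real \<Rightarrow> oline" where "n1 q th = (a1 th, - (a1 th \<bullet> q))"
definition MM :: "real^2 \<Rightarrow> real \<Rightarrow> oline" where "MM q th = (a2 th, - (a2 th \<bullet> q))"
definition kk :: "real^2 \<Rightarrow> real \<Rightarrow> real \<Rightarrow> oline" where
  "kk q th ph = cos ph *\<^sub>R (0, 1) + sin ph *\<^sub>R MM q th"
definition NN :: "real^2 \<Rightarrow> real \<Rightarrow> real \<Rightarrow> real \<Rightarrow> oline" where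
  "NN q th ph t = cos t *\<^sub>R n1 q th + sin t *\<^sub>R kk q th ph"

lemma e_inner: "e1 \<bullet> e1 = 1" "e2 \<bullet> e2 = 1" "e1 \<bullet> e2 = 0" "e2 \<bullet> e1 = 0"
  by (auto simp: e1_def e2_def inner_axis_axis)

lemma a_inner: "a1 th \<bullet> a1 th = 1" "a2 th \<bullet> a2 th = 1" "a1 th \<bullet> a2 th = 0" "a2 th \<bullet> a1 th = 0"
  by (auto simp: a1_def a2_def inner_add_left inner_add_right e_inner algebra_simps)

lemma a1_nz: "a1 th \<noteq> 0" using a_inner(1)[of th] by auto

lemma n1_props: "proper_line (n1 q th)" "on_line q (n1 q th)" "n1 q th \<noteq> 0"
  using a1_nz by (auto simp: proper_line_def on_line_def n1_def inner_commute zero_prod_def)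

lemma NN_nz: "NN q th ph t \<noteq> 0"
proof
  assume h: "NN q th ph t = 0"
  have f: "cos t *\<^sub>R a1 th + (sin t * sin ph) *\<^sub>R a2 th = 0"
    using arg_cong[OF h, of fst] by (simp add: NN_def n1_def kk_def MM_def)
  have s: "cos t * (- (a1 th \<bullet> q)) + sin t * (cos ph + sin ph * (- (a2 th \<bullet> q))) = 0"
    using arg_cong[OF h, of snd] by (simp add: NN_def n1_def kk_def MM_def)
  have c: "cos t = 0" using arg_cong[OF f, of "\<lambda>v. v \<bullet> a1 th"]
    by (simp add: inner_add_left a_inner)
  have d: "sin t * sin ph = 0" using arg_cong[OF f, of "\<lambda>v. v \<bullet> a2 th"]
    by (simp add: inner_add_left a_inner)
  have "sin t \<noteq> 0" using c sin_cos_squared_add[of t] by auto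
  then have "sin ph = 0" using d by simp
  moreover have "cos ph = 0" using s c \<open>sin t \<noteq> 0\<close> \<open>sin ph = 0\<close> by simp
  ultimately show False using sin_cos_squared_add[of ph] by simp
qed

lemma NN_cont[continuous_intros]:
  fixes S :: "'a::t2_space set"
  assumes "continuous_on S f" "continuous_on S g" "continuous_on S h"
  shows "continuous_on S (\<lambda>x. NN q (f x) (g x) (h x))"
  unfolding NN_def n1_def kk_def MM_def a1_def a2_def
  by (intro continuous_intros assms)

lemma n1_cont[continuous_intros]: fixes S :: "'a::t2_space set" assumes "continuous_on S f" shows "continuous_on S (\<lambda>x. n1 q (f x))"
  unfolding n1_def a1_def by (intro continuous_intros assms)

lemma n1_pi: "n1 q pi = - n1 q 0"
  by (simp add: n1_def a1_def)
lemma kk_anti: "kk q th (ph + pi) = - kk q th ph"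
  by (simp add: kk_def)
lemma kk_pi: "kk q pi ph = - kk q 0 (pi - ph)"
  by (simp add: kk_def MM_def a2_def)

lemma FF_comp_cont:
  assumes "md \<mu>" "continuous_on S f" "continuous_on S g" "\<And>x. x \<in> S \<Longrightarrow> f x \<noteq> 0 \<and> g x \<noteq> 0"
  shows "continuous_on S (\<lambda>x. FF \<mu> (f x) (g x))"
proof -
  have "continuous_on S (\<lambda>x. (f x, g x))" by (intro continuous_intros assms)
  moreover have "(\<lambda>x. (f x, g x)) ` S \<subseteq> {x. fst x \<noteq> 0 \<and> snd x \<noteq> 0}" using assms(4) by auto
  ultimately show ?thesis using continuous_on_compose2[OF md.FF_cont[OF assms(1)]] by fastforce
qed


lemma eps_lemma:
  assumes m1: "md \<mu>1" and m2: "md \<mu>2" and m3: "md \<mu>3" and ep: "\<epsilon> > 0"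
  shows "\<exists>th ph t. 0 \<le> th \<and> th \<le> pi \<and> 0 \<le> ph \<and> ph \<le> 2*pi \<and> 0 \<le> t \<and> t \<le> pi \<and>
     FF \<mu>1 (n1 q th) (NN q th ph t) = 0 \<and> FF \<mu>2 (n1 q th) (NN q th ph t) = 0 \<and>
     \<bar>FF \<mu>3 (n1 q th) (NN q th ph t)\<bar> \<le> \<epsilon>"
proof -
  define H where "H x t = FF \<mu>3 (n1 q (fst x)) (NN q (fst x) (snd x) t) + \<epsilon> * cos t"
    for x :: "real \<times> real" and t
  have Hc: "continuous_on UNIV (\<lambda>x. H x t)" for t
    unfolding H_def
    by (intro continuous_intros FF_comp_cont[OF m3]) (auto simp: n1_props NN_nz)
  have Hct: "continuous_on S (H x)" for x S
    unfolding H_def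
    by (intro continuous_intros FF_comp_cont[OF m3]) (auto simp: n1_props NN_nz)
  have dec: "H x t' < H x t" if "0 \<le> t" "t < t'" "t' \<le> pi" for x t t'
  proof -
    have "FF \<mu>3 (n1 q (fst x)) (NN q (fst x) (snd x) t') \<le> FF \<mu>3 (n1 q (fst x)) (NN q (fst x) (snd x) t)"
      unfolding NN_def by (rule md.FF_pencil_mono[OF m3]) (use that n1_props in auto)
    moreover have "cos t' < cos t" using that by (intro cos_monotone_0_pi) auto
    then have "\<epsilon> * cos t' < \<epsilon> * cos t" using ep by (intro mult_strict_left_mono)
    ultimately show ?thesis unfolding H_def by linarith
  qed
  have H0: "H x 0 > 0" for x
    using md.total_pos[OF m3] ep by (simp add: H_def NN_def md.FF_same[OF m3])
  have Hpi: "H x pi < 0" for x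
    using md.total_pos[OF m3] ep
    by (simp add: H_def NN_def md.FF_neg2[OF m3] n1_props md.FF_same[OF m3])
  have ex: "\<exists>t. 0 \<le> t \<and> t \<le> pi \<and> H x t = 0" for x
    using IVT2'[of "H x" pi 0 0] H0[of x] Hpi[of x] Hct[of "{0..pi}" x] by auto
  define T where "T x = (SOME t. 0 \<le> t \<and> t \<le> pi \<and> H x t = 0)" for x
  have Tz: "0 \<le> T x \<and> T x \<le> pi \<and> H x (T x) = 0" for x
    unfolding T_def by (rule someI_ex[OF ex])
  have uniq: "s = T x" if "0 \<le> s" "s \<le> pi" "H x s = 0" for x s
  proof (rule ccontr)
    assume "s \<noteq> T x"
    then consider "s < T x" | "T x < s" by linarith
    then show False
    proof cases
      case 1 then show ?thesis using dec[of s "T x" x] Tz[of x] that by auto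
    next
      case 2 then show ?thesis using dec[of "T x" s x] Tz[of x] that by auto
    qed
  qed
  have Tc: "continuous_on UNIV T"
    by (rule implicit_cont[OF Hc dec Tz]) auto
  have NNanti: "NN q a (b + pi) (pi - s) = - NN q a b s" for a b s
    by (simp add: NN_def kk_anti)
  have NNpi: "NN q pi b s = - NN q 0 (pi - b) s" for b s
    by (simp add: NN_def kk_pi n1_pi)
  have S1: "T (a, b + pi) = pi - T (a, b)" for a b
  proof -
    have "H (a, b + pi) (pi - T (a, b)) = - H (a, b) (T (a, b))"
      by (simp add: H_def NNanti md.FF_neg2[OF m3] NN_nz)
    then show ?thesis using Tz[of "(a,b)"] by (intro uniq[symmetric]) auto
  qed
  have S2: "T (pi, b) = T (0, pi - b)" for b
  proof -
    have "H (pi, b) s = H (0, pi - b) s" for s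
      by (simp add: H_def NNpi n1_pi md.FF_neg2[OF m3] md.FF_neg1[OF m3] NN_nz n1_props)
    then show ?thesis using Tz[of "(0, pi - b)"] by (intro uniq[symmetric]) auto
  qed
  define P where "P x = NN q (fst x) (snd x) (T x)" for x
  have Pc: "continuous_on UNIV P" unfolding P_def
    by (intro continuous_intros Tc)
  have Panti: "P (a, b + pi) = - P (a, b)" for a b
    unfolding P_def by (simp add: S1 NNanti)
  have Ppi: "P (pi, b) = - P (0, pi - b)" for b
    unfolding P_def by (simp add: S2 NNpi)
  have Pnz: "P x \<noteq> 0" for x by (simp add: P_def NN_nz)
  define G where "G x = complex_of_real (FF \<mu>1 (n1 q (fst x)) (P x)) + \<i> * complex_of_real (FF \<mu>2 (n1 q (fst x)) (P x))" for x
  have Gc: "continuous_on UNIV G" unfolding G_def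
    by (intro continuous_intros FF_comp_cont[OF m1] FF_comp_cont[OF m2] Pc) (auto simp: n1_props P_def NN_nz)
  have Ganti: "G (a, b + pi) = - G (a, b)" for a b
    unfolding G_def by (simp add: Panti md.FF_neg2[OF m1] md.FF_neg2[OF m2] Pnz)
  have Gglue: "G (pi, b) = G (0, pi - b)" for b
    unfolding G_def
    by (simp add: Ppi n1_pi md.FF_neg2[OF m1] md.FF_neg2[OF m2] md.FF_neg1[OF m1] md.FF_neg1[OF m2]
        Pnz n1_props)
  obtain a b where ab: "0 \<le> a" "a \<le> pi" "0 \<le> b" "b \<le> 2*pi" "G (a, b) = 0"
    using topo[OF Gc Ganti Gglue] by blast
  have z1: "FF \<mu>1 (n1 q a) (P (a, b)) = 0" using arg_cong[OF ab(5), of Re] by (simp add: G_def)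
  have z2: "FF \<mu>2 (n1 q a) (P (a, b)) = 0" using arg_cong[OF ab(5), of Im] by (simp add: G_def)
  have z3: "FF \<mu>3 (n1 q a) (P (a, b)) = - \<epsilon> * cos (T (a, b))"
    using Tz[of "(a,b)"] by (simp add: H_def P_def)
  have "\<bar>- \<epsilon> * cos (T (a, b))\<bar> \<le> \<epsilon>" using ep by (simp add: abs_mult)
  then show ?thesis using ab z1 z2 z3 Tz[of "(a,b)"] unfolding P_def
    by (intro exI[of _ a] exI[of _ b] exI[of _ "T (a,b)"]) auto
qed


theorem theorem4:
  fixes \<mu>1 \<mu>2 \<mu>3 :: "(real^2) measure" and q :: "real^2"
  assumes "mass_distribution \<mu>1" "mass_distribution \<mu>2" "mass_distribution \<mu>3"
  shows "\<exists>l1 l2. proper_line l1 \<and> valid_line l2 \<and> on_line q l1 \<and>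
           simul_bisects [l1, l2] [\<mu>1, \<mu>2, \<mu>3]"
proof -
  have m1: "md \<mu>1" and m2: "md \<mu>2" and m3: "md \<mu>3" using assms by (auto intro: md.intro)
  define L1 where "L1 x = n1 q (fst x)" for x :: "real \<times> real \<times> real"
  define L2 where "L2 x = NN q (fst x) (fst (snd x)) (snd (snd x))" for x :: "real \<times> real \<times> real"
  define \<Psi> where "\<Psi> x = \<bar>FF \<mu>1 (L1 x) (L2 x)\<bar> + \<bar>FF \<mu>2 (L1 x) (L2 x)\<bar> + \<bar>FF \<mu>3 (L1 x) (L2 x)\<bar>" for x
  define B where "B = {0..pi} \<times> {0..2*pi} \<times> {0::real..pi}"
  have Bc: "compact B" unfolding B_def by (intro compact_Times compact_Icc)
  have Bne: "B \<noteq> {}" unfolding B_def by auto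
  have nz: "L1 x \<noteq> 0 \<and> L2 x \<noteq> 0" for x by (simp add: L1_def L2_def n1_props NN_nz)
  have L1c: "continuous_on S L1" for S unfolding L1_def by (intro continuous_intros)
  have L2c: "continuous_on S L2" for S unfolding L2_def by (intro continuous_intros)
  have \<Psi>c: "continuous_on B \<Psi>" unfolding \<Psi>_def
    by (intro continuous_intros FF_comp_cont[OF m1] FF_comp_cont[OF m2] FF_comp_cont[OF m3] L1c L2c nz)
  have "\<exists>x\<in>B. \<Psi> x = 0"
  proof (rule ccontr)
    assume neg: "\<not> ?thesis"
    obtain x0 where x0: "x0 \<in> B" "\<And>y. y \<in> B \<Longrightarrow> \<Psi> x0 \<le> \<Psi> y"
      using continuous_attains_inf[OF Bc Bne \<Psi>c] by blast
    have "\<Psi> x0 \<ge> 0" by (simp add: \<Psi>_def)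
    then have dp: "\<Psi> x0 > 0" using neg x0 by force
    obtain th ph t where w: "0 \<le> th \<and> th \<le> pi \<and> 0 \<le> ph \<and> ph \<le> 2*pi \<and> 0 \<le> t \<and> t \<le> pi \<and>
     FF \<mu>1 (n1 q th) (NN q th ph t) = 0 \<and> FF \<mu>2 (n1 q th) (NN q th ph t) = 0 \<and>
     \<bar>FF \<mu>3 (n1 q th) (NN q th ph t)\<bar> \<le> \<Psi> x0 / 2"
      using eps_lemma[OF m1 m2 m3, of "\<Psi> x0 / 2" q] dp by auto
    then have "(th, ph, t) \<in> B" by (auto simp: B_def)
    moreover have "\<Psi> (th, ph, t) \<le> \<Psi> x0 / 2" using w by (simp add: \<Psi>_def L1_def L2_def)
    ultimately show False using x0(2) dp by force
  qed
  then obtain x where "\<Psi> x = 0" by blast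
  then have z: "FF \<mu>1 (L1 x) (L2 x) = 0" "FF \<mu>2 (L1 x) (L2 x) = 0" "FF \<mu>3 (L1 x) (L2 x) = 0"
    unfolding \<Psi>_def by (smt (verit) abs_ge_zero)+
  have "simul_bisects [L1 x, L2 x] [\<mu>1, \<mu>2, \<mu>3]"
    using md.FF_bisect[OF m1 z(1)] md.FF_bisect[OF m2 z(2)] md.FF_bisect[OF m3 z(3)]
    by (simp add: simul_bisects_def)
  moreover have "valid_line (L2 x)" using nz[of x] by (cases "L2 x") (auto simp: valid_line_def zero_prod_def)
  ultimately show ?thesis using n1_props[of q "fst x"] unfolding L1_def by blast
qed

end
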